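(* Let $(\theta_1,\theta_2)$, $K_2$ be as in the normal form: on a domain in the $(x,z)$-half-plane $z>0$, $$\theta_1=\frac{dx}{z},\qquad \theta_2=\frac{dz-(\mu(x)z^2+1)dx}{z},\qquad K_2=1-\mu(x)z^2,$$ with $\mu$ a smooth function of one variable. Consider the linear system for functions $a,b,p$: $$da=(2a+p+1)\theta_1,\qquad db=-2b(K_2-1)\theta_1+(2b-p+1)\theta_2,\qquad dp=-\bigl(2b+(K_2-2)(p-1)\bigr)\theta_1+(2a+p+1)\theta_2.$$ Assume the domain is connected and its projection to the $x$-axis is an interval. Then $(a,b,p)$ is a solution if and only if $$a=-1+f(x),\qquad b=-(1+\mu(x)z^2)f(x)+z f'(x)-\tfrac12 z^2 f''(x),\qquad p=1-2f(x)+zf'(x),$$ for a function $f$ satisfying $f'''+4\mu f'+2\mu' f=0$. The general such $f$ is $$f=-c_0\phi_0^2-2c_1\phi_0\phi_1-c_2\phi_1^2,$$ with constants $c_0,c_1,c_2$, where $(\phi_0,\phi_1)$ is any pair of solutions of $\phi''+\mu\phi=0$ satisfying $\phi_0\phi_1'-\phi_1\phi_0'=1$.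
   Context: This linear system is the specialization, under $K_1\equiv1$ (Type I), of the system governing realizations of an endomorphism field with the given coframing. In that correspondence, positive solutions $a,b$ give realizations. *)

theory Defs
  imports "HOL-Analysis.Analysis"
begin

text \<open>Points of the (x,z)-half-plane are pairs (x,z). A 1-form is represented by the
linear functional it defines at each point; "d a = omega" means a has Frechet derivative omega.\<close>

definition smooth_on :: "real set \<Rightarrow> (real \<Rightarrow> real) \<Rightarrow> bool" where
  "smooth_on I g \<longleftrightarrow> (\<forall>n. \<forall>x\<in>I. ((deriv ^^ n) g) differentiable (at x))"

definition K2 :: "(real \<Rightarrow> real) \<Rightarrow> real \<Rightarrow> real \<Rightarrow> real" where
  "K2 \<mu> x z = 1 - \<mu> x * z^2"

definition theta1 :: "real \<Rightarrow> real \<Rightarrow> real \<times> real \<Rightarrow> real" where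
  "theta1 x z = (\<lambda>(dx, dz). dx / z)"

definition theta2 :: "(real \<Rightarrow> real) \<Rightarrow> real \<Rightarrow> real \<Rightarrow> real \<times> real \<Rightarrow> real" where
  "theta2 \<mu> x z = (\<lambda>(dx, dz). (dz - (\<mu> x * z^2 + 1) * dx) / z)"

definition is_solution ::
  "(real \<Rightarrow> real) \<Rightarrow> (real \<times> real) set \<Rightarrow> (real \<times> real \<Rightarrow> real) \<Rightarrow> (real \<times> real \<Rightarrow> real)
     \<Rightarrow> (real \<times> real \<Rightarrow> real) \<Rightarrow> bool" where
  "is_solution \<mu> U a b p \<longleftrightarrow>
     (\<forall>x z. (x, z) \<in> U \<longrightarrow>
        (a has_derivative
           (\<lambda>v. (2 * a (x,z) + p (x,z) + 1) * theta1 x z v)) (at (x, z)) \<and>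
        (b has_derivative
           (\<lambda>v. - 2 * b (x,z) * (K2 \<mu> x z - 1) * theta1 x z v
                 + (2 * b (x,z) - p (x,z) + 1) * theta2 \<mu> x z v)) (at (x, z)) \<and>
        (p has_derivative
           (\<lambda>v. - (2 * b (x,z) + (K2 \<mu> x z - 2) * (p (x,z) - 1)) * theta1 x z v
                 + (2 * a (x,z) + p (x,z) + 1) * theta2 \<mu> x z v)) (at (x, z)))"

end

theory Submission
  imports Defs
begin

lemma two_ab: fixes a b :: real shows "\<bar>2*a*b\<bar> \<le> a^2+b^2"
proof -
  have "0 \<le> (a-b)^2" "0 \<le> (a+b)^2" by simp_all
  thus ?thesis by (simp add: abs_le_iff power2_eq_square algebra_simps)
qed

lemma energy_bound:
  fixes a b c m m' M :: real
  assumes "\<bar>m\<bar> \<le> M" "\<bar>m'\<bar> \<le> M"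
  shows "\<bar>2*a*b + 2*b*c + 2*c*(- 4 * m * b - 2 * m' * a)\<bar> \<le> (2 + 6*M) * (a^2+b^2+c^2)"
proof -
  have M: "M \<ge> 0" using assms by linarith
  have 1: "\<bar>2*a*b\<bar> \<le> a^2+b^2" by (rule two_ab)
  have 2: "\<bar>2*b*c\<bar> \<le> b^2+c^2" by (rule two_ab)
  have 3: "\<bar>2*c*(- 4 * m * b)\<bar> \<le> 4*M*(b^2+c^2)"
  proof -
    have "\<bar>2*c*(- 4 * m * b)\<bar> = 4*\<bar>m\<bar>*\<bar>2*b*c\<bar>" by (simp add: abs_mult)
    also have "\<dots> \<le> 4*M*(b^2+c^2)" using assms(1) two_ab[of b c]
      by (intro mult_mono) auto
    finally show ?thesis .
  qed
  have 4: "\<bar>2*c*(- 2 * m' * a)\<bar> \<le> 2*M*(a^2+c^2)"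
  proof -
    have "\<bar>2*c*(- 2 * m' * a)\<bar> = 2*\<bar>m'\<bar>*\<bar>2*a*c\<bar>" by (simp add: abs_mult)
    also have "\<dots> \<le> 2*M*(a^2+c^2)" using assms(2) two_ab[of a c]
      by (intro mult_mono) auto
    finally show ?thesis .
  qed
  have "\<bar>2*a*b + 2*b*c + 2*c*(- 4 * m * b - 2 * m' * a)\<bar> \<le> \<bar>2*a*b\<bar> + \<bar>2*b*c\<bar> + \<bar>2*c*(- 4 * m * b)\<bar> + \<bar>2*c*(- 2 * m' * a)\<bar>"
    by (simp add: algebra_simps)
  also have "\<dots> \<le> (a^2+b^2) + (b^2+c^2) + 4*M*(b^2+c^2) + 2*M*(a^2+c^2)"
    using 1 2 3 4 by linarith
  also have "\<dots> \<le> (2 + 6*M) * (a^2+b^2+c^2)"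
    using M by (simp add: algebra_simps)
  finally show ?thesis .
qed

definition sol :: "(real\<Rightarrow>real) \<Rightarrow> real set \<Rightarrow> (real\<Rightarrow>real) \<Rightarrow> (real\<Rightarrow>real) \<Rightarrow> (real\<Rightarrow>real) \<Rightarrow> bool" where
"sol \<mu> J y0 y1 y2 \<longleftrightarrow> (\<forall>x\<in>J. (y0 has_real_derivative y1 x) (at x) \<and> (y1 has_real_derivative y2 x) (at x)
   \<and> (y2 has_real_derivative (- 4 * \<mu> x * y1 x - 2 * deriv \<mu> x * y0 x)) (at x))"

lemma sol_zero:
  assumes J: "is_interval J" and mu: "\<forall>x\<in>J. \<mu> differentiable (at x) \<and> deriv \<mu> differentiable (at x)"
    and s: "sol \<mu> J h0 h1 h2" and x0: "x0 \<in> J" and z: "h0 x0 = 0" "h1 x0 = 0" "h2 x0 = 0"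
    and x1: "x1 \<in> J"
  shows "h0 x1 = 0 \<and> h1 x1 = 0 \<and> h2 x1 = 0"
proof -
  define K where "K = {min x0 x1 .. max x0 x1}"
  have m1: "min x0 x1 \<in> J" "max x0 x1 \<in> J" using x0 x1 by (simp_all add: min_def max_def)
  have KJ: "K \<subseteq> J" unfolding K_def
  proof
    fix t assume "t \<in> {min x0 x1 .. max x0 x1}"
    then have "min x0 x1 \<le> t" "t \<le> max x0 x1" by auto
    then show "t \<in> J" using J m1 unfolding is_interval_1 by blast
  qed
  have "continuous_on K (\<lambda>t. \<bar>\<mu> t\<bar> + \<bar>deriv \<mu> t\<bar>)"
  proof (intro continuous_at_imp_continuous_on ballI continuous_intros)
    fix t assume "t \<in> K" then have "t \<in> J" using KJ by auto
    then show "isCont \<mu> t" "isCont (deriv \<mu>) t" using mu differentiable_imp_continuous_within by blast+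
  qed
  moreover have "compact K" "K \<noteq> {}" unfolding K_def by auto
  ultimately obtain tm where "tm \<in> K" and tm: "\<forall>t\<in>K. \<bar>\<mu> t\<bar> + \<bar>deriv \<mu> t\<bar> \<le> \<bar>\<mu> tm\<bar> + \<bar>deriv \<mu> tm\<bar>"
    using continuous_attains_sup[of K "\<lambda>t. \<bar>\<mu> t\<bar> + \<bar>deriv \<mu> t\<bar>"] by blast
  define M where "M = \<bar>\<mu> tm\<bar> + \<bar>deriv \<mu> tm\<bar>"
  have Mb: "\<bar>\<mu> t\<bar> \<le> M" "\<bar>deriv \<mu> t\<bar> \<le> M" if "t \<in> K" for t 
  proof -
    have "\<bar>\<mu> t\<bar> + \<bar>deriv \<mu> t\<bar> \<le> M" using tm that unfolding M_def by blast
    then show "\<bar>\<mu> t\<bar> \<le> M" "\<bar>deriv \<mu> t\<bar> \<le> M" using abs_ge_zero[of "\<mu> t"] abs_ge_zero[of "deriv \<mu> t"] by linarith+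
  qed
  have M0: "M \<ge> 0" unfolding M_def by simp
  define C where "C = 2 + 6*M"
  define E where "E t = h0 t ^ 2 + h1 t ^ 2 + h2 t ^ 2" for t
  define E' where "E' t = 2*h0 t*h1 t + 2*h1 t*h2 t + 2*h2 t*(- 4 * \<mu> t * h1 t - 2 * deriv \<mu> t * h0 t)" for t
  have dE: "(E has_real_derivative E' t) (at t)" if "t \<in> J" for t
  proof -
    have d: "(h0 has_real_derivative h1 t) (at t)" "(h1 has_real_derivative h2 t) (at t)"
      "(h2 has_real_derivative (- 4 * \<mu> t * h1 t - 2 * deriv \<mu> t * h0 t)) (at t)"
      using s that unfolding sol_def by auto
    show ?thesis unfolding E_def E'_def
      by (rule derivative_eq_intros d refl)+ (simp add: algebra_simps)
  qed
  have bE: "\<bar>E' t\<bar> \<le> C * E t" if "t \<in> K" for t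
    unfolding E'_def C_def E_def using energy_bound[OF Mb[OF that]] by simp
  have E0: "E x0 = 0" unfolding E_def using z by simp
  have Enn: "E t \<ge> 0" for t unfolding E_def by simp
  have "E x1 = 0"
  proof (cases "x0 \<le> x1")
    case True
    define g where "g t = E t * exp (- C * t)" for t
    have "g x1 \<le> g x0"
    proof (rule DERIV_nonpos_imp_nonincreasing[OF True])
      fix t assume t: "x0 \<le> t" "t \<le> x1"
      then have tK: "t \<in> K" unfolding K_def using True by auto
      have "(g has_real_derivative (E' t * exp (- C * t) + E t * (exp (- C * t) * (- C)))) (at t)"
        unfolding g_def using KJ tK by (auto intro!: derivative_eq_intros dE)
      moreover have "E' t * exp (- C * t) + E t * (exp (- C * t) * (- C)) = (E' t - C * E t) * exp (- C * t)"
        by (simp add: algebra_simps)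
      moreover have "(E' t - C * E t) * exp (- C * t) \<le> 0"
        using bE[OF tK] by (intro mult_nonpos_nonneg) auto
      ultimately show "\<exists>y. (g has_real_derivative y) (at t) \<and> y \<le> 0" by auto
    qed
    then have "E x1 * exp (- C * x1) \<le> 0" unfolding g_def using E0 by simp
    then show ?thesis using Enn[of x1] by (simp add: mult_le_0_iff)
  next
    case False
    then have F: "x1 \<le> x0" by simp
    define g where "g t = E t * exp (C * t)" for t
    have "g x1 \<le> g x0"
    proof (rule DERIV_nonneg_imp_nondecreasing[OF F])
      fix t assume t: "x1 \<le> t" "t \<le> x0"
      then have tK: "t \<in> K" unfolding K_def using F by auto
      have "(g has_real_derivative (E' t * exp (C * t) + E t * (exp (C * t) * C))) (at t)"
        unfolding g_def using KJ tK by (auto intro!: derivative_eq_intros dE)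
      moreover have "E' t * exp (C * t) + E t * (exp (C * t) * C) = (E' t + C * E t) * exp (C * t)"
        by (simp add: algebra_simps)
      moreover have "(E' t + C * E t) * exp (C * t) \<ge> 0"
        using bE[OF tK] by (intro mult_nonneg_nonneg) auto
      ultimately show "\<exists>y. (g has_real_derivative y) (at t) \<and> y \<ge> 0" by auto
    qed
    then have "E x1 * exp (C * x1) \<le> 0" unfolding g_def using E0 by simp
    then show ?thesis using Enn[of x1] by (simp add: mult_le_0_iff)
  qed
  then have e: "h0 x1 ^ 2 + h1 x1 ^ 2 + h2 x1 ^ 2 = 0" unfolding E_def .
  have "h0 x1 ^ 2 = 0" "h1 x1 ^ 2 = 0" "h2 x1 ^ 2 = 0"
    using e zero_le_power2[of "h0 x1"] zero_le_power2[of "h1 x1"] zero_le_power2[of "h2 x1"] by linarith+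
  then show ?thesis by simp
qed

lemma part2_fwd:
  fixes \<mu> f f1 f2 f3 u v du dv uu vv :: "real \<Rightarrow> real"
  assumes I: "is_interval I" and mu: "\<forall>x\<in>I. \<mu> differentiable (at x)"
    and ph: "\<forall>x\<in>I. (u has_real_derivative du x) (at x) \<and>
                      (du has_real_derivative uu x) (at x) \<and>
                      (v has_real_derivative dv x) (at x) \<and>
                      (dv has_real_derivative vv x) (at x) \<and>
                      uu x + \<mu> x * u x = 0 \<and> vv x + \<mu> x * v x = 0 \<and>
                      u x * dv x - v x * du x = 1"
    and fs: "\<forall>x\<in>I. (f has_real_derivative f1 x) (at x) \<and>
                        (f1 has_real_derivative f2 x) (at x) \<and>
                        (f2 has_real_derivative f3 x) (at x) \<and>
                        f3 x + 4 * \<mu> x * f1 x + 2 * deriv \<mu> x * f x = 0"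
  shows "\<exists>c0 c1 c2. \<forall>x\<in>I. f x = - c0 * (u x)^2 - 2 * c1 * u x * v x - c2 * (v x)^2"
proof -
  define Qvv where "Qvv x = f x * (2 * dv x^2 + 2 * \<mu> x * v x^2) + f2 x * v x^2 - 2 * f1 x * v x * dv x" for x
  define Quv where "Quv x = f x * (2 * du x * dv x + 2 * \<mu> x * u x * v x) + f2 x * u x * v x - f1 x * (du x * v x + u x * dv x)" for x
  define Quu where "Quu x = f x * (2 * du x^2 + 2 * \<mu> x * u x^2) + f2 x * u x^2 - 2 * f1 x * u x * du x" for x
  have cv: "convex I" using I by (simp add: is_interval_convex)
  have dmu: "(\<mu> has_real_derivative deriv \<mu> x) (at x)" if "x \<in> I" for x
    using mu that DERIV_deriv_iff_real_differentiable by blast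
  have "\<exists>c. \<forall>x\<in>I. Qvv x = c"
  proof (rule has_field_derivative_zero_constant[OF cv])
    fix x assume x: "x \<in> I"
    note d = dmu[OF x] conjunct1[OF ph[rule_format, OF x]] conjunct1[OF conjunct2[OF ph[rule_format, OF x]]]
      conjunct1[OF conjunct2[OF conjunct2[OF ph[rule_format, OF x]]]]
    have e: "uu x = - \<mu> x * u x" "vv x = - \<mu> x * v x" "f3 x = - 4 * \<mu> x * f1 x - 2 * deriv \<mu> x * f x"
      using ph fs x by (auto simp: algebra_simps eq_neg_iff_add_eq_0)
    have "(Qvv has_real_derivative 0) (at x)" unfolding Qvv_def
      apply (rule derivative_eq_intros | use ph fs x dmu[OF x] in blast)+
      by (simp add: e algebra_simps power2_eq_square)
    then show "(Qvv has_real_derivative 0) (at x within I)" by (rule has_field_derivative_at_within)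
  qed
  moreover have "\<exists>c. \<forall>x\<in>I. Quv x = c"
  proof (rule has_field_derivative_zero_constant[OF cv])
    fix x assume x: "x \<in> I"
    note d = dmu[OF x] conjunct1[OF ph[rule_format, OF x]] conjunct1[OF conjunct2[OF ph[rule_format, OF x]]]
      conjunct1[OF conjunct2[OF conjunct2[OF ph[rule_format, OF x]]]]
    have e: "uu x = - \<mu> x * u x" "vv x = - \<mu> x * v x" "f3 x = - 4 * \<mu> x * f1 x - 2 * deriv \<mu> x * f x"
      using ph fs x by (auto simp: algebra_simps eq_neg_iff_add_eq_0)
    have "(Quv has_real_derivative 0) (at x)" unfolding Quv_def
      apply (rule derivative_eq_intros | use ph fs x dmu[OF x] in blast)+
      by (simp add: e algebra_simps power2_eq_square)
    then show "(Quv has_real_derivative 0) (at x within I)" by (rule has_field_derivative_at_within)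
  qed
  moreover have "\<exists>c. \<forall>x\<in>I. Quu x = c"
  proof (rule has_field_derivative_zero_constant[OF cv])
    fix x assume x: "x \<in> I"
    note d = dmu[OF x] conjunct1[OF ph[rule_format, OF x]] conjunct1[OF conjunct2[OF ph[rule_format, OF x]]]
      conjunct1[OF conjunct2[OF conjunct2[OF ph[rule_format, OF x]]]]
    have e: "uu x = - \<mu> x * u x" "vv x = - \<mu> x * v x" "f3 x = - 4 * \<mu> x * f1 x - 2 * deriv \<mu> x * f x"
      using ph fs x by (auto simp: algebra_simps eq_neg_iff_add_eq_0)
    have "(Quu has_real_derivative 0) (at x)" unfolding Quu_def
      apply (rule derivative_eq_intros | use ph fs x dmu[OF x] in blast)+
      by (simp add: e algebra_simps power2_eq_square)
    then show "(Quu has_real_derivative 0) (at x within I)" by (rule has_field_derivative_at_within)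
  qed
  ultimately obtain Cvv Cuv Cuu where C: "\<forall>x\<in>I. Qvv x = Cvv" "\<forall>x\<in>I. Quv x = Cuv" "\<forall>x\<in>I. Quu x = Cuu"
    by blast
  show ?thesis
  proof (intro exI ballI)
    fix x assume x: "x \<in> I"
    have W: "u x * dv x - v x * du x = 1" using ph x by blast
    have "Qvv x * u x ^ 2 - 2 * Quv x * u x * v x + Quu x * v x ^ 2 = 2 * f x * (u x * dv x - v x * du x) ^ 2"
      unfolding Qvv_def Quv_def Quu_def by (simp add: power2_eq_square algebra_simps)
    then have "f x = (Qvv x * u x ^ 2 - 2 * Quv x * u x * v x + Quu x * v x ^ 2) / 2" using W by simp
    then show "f x = - (- Cvv / 2) * (u x)^2 - 2 * (Cuv / 2) * u x * v x - (- Cuu / 2) * (v x)^2"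
      using C x by (simp add: field_simps)
  qed
qed

lemma part2_bwd:
  fixes \<mu> f u v du dv uu vv :: "real \<Rightarrow> real"
  assumes I: "open I" and mu: "\<forall>x\<in>I. \<mu> differentiable (at x)"
    and ph: "\<forall>x\<in>I. (u has_real_derivative du x) (at x) \<and>
                      (du has_real_derivative uu x) (at x) \<and>
                      (v has_real_derivative dv x) (at x) \<and>
                      (dv has_real_derivative vv x) (at x) \<and>
                      uu x + \<mu> x * u x = 0 \<and> vv x + \<mu> x * v x = 0 \<and>
                      u x * dv x - v x * du x = 1"
    and fe: "\<forall>x\<in>I. f x = - c0 * (u x)^2 - 2 * c1 * u x * v x - c2 * (v x)^2"
  shows "\<exists>f1 f2 f3. \<forall>x\<in>I. (f has_real_derivative f1 x) (at x) \<and>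
                        (f1 has_real_derivative f2 x) (at x) \<and>
                        (f2 has_real_derivative f3 x) (at x) \<and>
                        f3 x + 4 * \<mu> x * f1 x + 2 * deriv \<mu> x * f x = 0"
proof (intro exI ballI conjI)
  define G where "G x = - c0 * (u x)^2 - 2 * c1 * u x * v x - c2 * (v x)^2" for x
  define g1 where "g1 x = - c0 * (2 * u x * du x) - 2 * c1 * (du x * v x + u x * dv x) - c2 * (2 * v x * dv x)" for x
  define g2 where "g2 x = - 2 * c0 * du x ^ 2 + 2 * c0 * \<mu> x * u x ^ 2 + 4 * c1 * \<mu> x * u x * v x
     - 4 * c1 * du x * dv x - 2 * c2 * dv x ^ 2 + 2 * c2 * \<mu> x * v x ^ 2" for x
  define g3 where "g3 x = 4 * c0 * du x * \<mu> x * u x + 2 * c0 * (deriv \<mu> x * u x ^ 2 + 2 * \<mu> x * u x * du x)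
     + 4 * c1 * (deriv \<mu> x * u x * v x + \<mu> x * (du x * v x + u x * dv x))
     + 4 * c1 * (\<mu> x * u x * dv x + du x * \<mu> x * v x) + 4 * c2 * dv x * \<mu> x * v x
     + 2 * c2 * (deriv \<mu> x * v x ^ 2 + 2 * \<mu> x * v x * dv x)" for x
  fix x assume x: "x \<in> I"
  have dmu: "(\<mu> has_real_derivative deriv \<mu> x) (at x)"
    using mu x DERIV_deriv_iff_real_differentiable by blast
  have e: "uu x = - \<mu> x * u x" "vv x = - \<mu> x * v x"
    using ph x by (auto simp: algebra_simps eq_neg_iff_add_eq_0)
  have "(G has_real_derivative g1 x) (at x)" unfolding G_def g1_def
    apply (rule derivative_eq_intros | use ph x in blast)+
    by (simp add: algebra_simps power2_eq_square)
  then show "(f has_real_derivative g1 x) (at x)"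
    by (rule has_field_derivative_transform_within_open[OF _ I x]) (use fe in \<open>simp add: G_def\<close>)
  show "(g1 has_real_derivative g2 x) (at x)" unfolding g1_def g2_def
    apply (rule derivative_eq_intros | use ph x in blast)+
    by (simp add: e algebra_simps power2_eq_square)
  show "(g2 has_real_derivative g3 x) (at x)" unfolding g2_def g3_def
    apply (rule derivative_eq_intros | use ph x dmu in blast)+
    by (simp add: e algebra_simps power2_eq_square)
  show "g3 x + 4 * \<mu> x * g1 x + 2 * deriv \<mu> x * f x = 0"
  proof -
    have fx: "f x = - c0 * (u x)^2 - 2 * c1 * u x * v x - c2 * (v x)^2" using fe x by blast
    show ?thesis unfolding g1_def g3_def fx by (simp add: algebra_simps power2_eq_square)
  qed
qed

lemma hd_fst: "(f has_real_derivative D) (at x) \<Longrightarrow> ((\<lambda>q. f (fst q)) has_derivative (\<lambda>v. D * fst v)) (at (x,z))"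
proof -
  assume d: "(f has_real_derivative D) (at x)"
  have "(fst has_derivative fst) (at (x,z))" by (rule has_derivative_fst[OF has_derivative_ident])
  moreover have "(f has_derivative (*) D) (at (fst (x,z)))" using d by (simp add: has_field_derivative_def)
  ultimately show ?thesis using has_derivative_compose by fastforce
qed

lemma hd_snd: "(snd has_derivative snd) (at q)" by (rule has_derivative_snd[OF has_derivative_ident])

lemma part1_bwd:
  fixes \<mu> f f1 f2 f3 :: "real \<Rightarrow> real"
  assumes U: "open U" "U \<subseteq> {(x, z). z > 0}" and mu: "\<forall>x\<in>fst ` U. \<mu> differentiable (at x)"
    and fs: "\<forall>x\<in>fst ` U. (f has_real_derivative f1 x) (at x) \<and>
                        (f1 has_real_derivative f2 x) (at x) \<and>
                        (f2 has_real_derivative f3 x) (at x) \<and>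
                        f3 x + 4 * \<mu> x * f1 x + 2 * deriv \<mu> x * f x = 0"
    and abp: "\<forall>x z. (x, z) \<in> U \<longrightarrow>
             a (x, z) = -1 + f x \<and>
             b (x, z) = - (1 + \<mu> x * z^2) * f x + z * f1 x - 1/2 * z^2 * f2 x \<and>
             p (x, z) = 1 - 2 * f x + z * f1 x"
  shows "is_solution \<mu> U a b p"
  unfolding is_solution_def
proof (intro allI impI conjI)
  fix x z assume q: "(x, z) \<in> U"
  then have xI: "x \<in> fst ` U" by force
  have z: "z > 0" using q U by auto
  have dmu: "(\<mu> has_real_derivative deriv \<mu> x) (at x)"
    using mu xI DERIV_deriv_iff_real_differentiable by blast
  have d: "(f has_real_derivative f1 x) (at x)" "(f1 has_real_derivative f2 x) (at x)"
     "(f2 has_real_derivative f3 x) (at x)" and ode: "f3 x = - 4 * \<mu> x * f1 x - 2 * deriv \<mu> x * f x"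
    using fs xI by (auto simp: algebra_simps eq_neg_iff_add_eq_0)
  note ab0 = abp[rule_format, OF q]
  note ab = ab0[THEN conjunct1] ab0[THEN conjunct2, THEN conjunct1] ab0[THEN conjunct2, THEN conjunct2]
  define A where "A q = -1 + f (fst q)" for q :: "real \<times> real"
  define B where "B q = - (1 + \<mu> (fst q) * snd q ^ 2) * f (fst q) + snd q * f1 (fst q) - 1/2 * snd q ^ 2 * f2 (fst q)" for q :: "real \<times> real"
  define P where "P q = 1 - 2 * f (fst q) + snd q * f1 (fst q)" for q :: "real \<times> real"
  have eqs: "a q = A q" "b q = B q" "p q = P q" if "q \<in> U" for q
    using abp that unfolding A_def B_def P_def by (cases q; auto)+
  have "(A has_derivative (\<lambda>v. (2 * a (x,z) + p (x,z) + 1) * theta1 x z v)) (at (x, z))"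
    unfolding A_def
    apply (rule has_derivative_eq_rhs)
     apply (rule derivative_intros hd_fst hd_snd d)+
    apply (rule ext)
    using z by (auto simp: ab theta1_def field_simps split: prod.splits)
  then show "(a has_derivative (\<lambda>v. (2 * a (x,z) + p (x,z) + 1) * theta1 x z v)) (at (x, z))"
    by (rule has_derivative_transform_within_open[OF _ U(1) q]) (simp add: eqs)
  have "(B has_derivative (\<lambda>v. - 2 * b (x,z) * (K2 \<mu> x z - 1) * theta1 x z v
                 + (2 * b (x,z) - p (x,z) + 1) * theta2 \<mu> x z v)) (at (x, z))"
    unfolding B_def
    apply (rule has_derivative_eq_rhs)
     apply (rule derivative_intros hd_fst hd_snd d dmu)+
    apply (rule ext)
    using z by (auto simp: ab ode K2_def theta1_def theta2_def field_simps power2_eq_square split: prod.splits)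
  then show "(b has_derivative (\<lambda>v. - 2 * b (x,z) * (K2 \<mu> x z - 1) * theta1 x z v
                 + (2 * b (x,z) - p (x,z) + 1) * theta2 \<mu> x z v)) (at (x, z))"
    by (rule has_derivative_transform_within_open[OF _ U(1) q]) (simp add: eqs)
  have "(P has_derivative (\<lambda>v. - (2 * b (x,z) + (K2 \<mu> x z - 2) * (p (x,z) - 1)) * theta1 x z v
                 + (2 * a (x,z) + p (x,z) + 1) * theta2 \<mu> x z v)) (at (x, z))"
    unfolding P_def
    apply (rule has_derivative_eq_rhs)
     apply (rule derivative_intros hd_fst hd_snd d dmu)+
    apply (rule ext)
    using z by (auto simp: ab ode K2_def theta1_def theta2_def field_simps power2_eq_square split: prod.splits)
  then show "(p has_derivative (\<lambda>v. - (2 * b (x,z) + (K2 \<mu> x z - 2) * (p (x,z) - 1)) * theta1 x z v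
                 + (2 * a (x,z) + p (x,z) + 1) * theta2 \<mu> x z v)) (at (x, z))"
    by (rule has_derivative_transform_within_open[OF _ U(1) q]) (simp add: eqs)
qed
lemma part1_derivs:
  fixes \<mu> :: "real \<Rightarrow> real"
  assumes sol: "is_solution \<mu> U a b p" and q: "(x, z) \<in> U" and z: "z > 0"
    and dmu: "(\<mu> has_real_derivative deriv \<mu> x) (at x)"
  defines "F \<equiv> \<lambda>q. a q + 1"
    and "F1 \<equiv> \<lambda>q. (2 * a q + p q + 1) / snd q"
    and "F2 \<equiv> \<lambda>q. 2 * (- (1 + \<mu> (fst q) * snd q ^ 2) * (a q + 1) + snd q * ((2 * a q + p q + 1) / snd q) - b q) / snd q ^ 2"
  shows "(F has_derivative (\<lambda>v. F1 (x,z) * fst v)) (at (x,z))"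
    "(F1 has_derivative (\<lambda>v. F2 (x,z) * fst v)) (at (x,z))"
    "(F2 has_derivative (\<lambda>v. (- 4 * \<mu> x * F1 (x,z) - 2 * deriv \<mu> x * F (x,z)) * fst v)) (at (x,z))"
proof -
  have da: "(a has_derivative (\<lambda>v. (2 * a (x,z) + p (x,z) + 1) * theta1 x z v)) (at (x, z))"
   and db: "(b has_derivative
           (\<lambda>v. - 2 * b (x,z) * (K2 \<mu> x z - 1) * theta1 x z v
                 + (2 * b (x,z) - p (x,z) + 1) * theta2 \<mu> x z v)) (at (x, z))"
   and dp: "(p has_derivative
           (\<lambda>v. - (2 * b (x,z) + (K2 \<mu> x z - 2) * (p (x,z) - 1)) * theta1 x z v
                 + (2 * a (x,z) + p (x,z) + 1) * theta2 \<mu> x z v)) (at (x, z))"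
    using sol q unfolding is_solution_def by blast+
  show "(F has_derivative (\<lambda>v. F1 (x,z) * fst v)) (at (x,z))"
    unfolding F_def F1_def
    apply (rule has_derivative_eq_rhs)
     apply (rule derivative_intros da)+
    apply (rule ext)
    apply (clarsimp simp: theta1_def theta2_def K2_def split: prod.splits)
    done
  show "(F1 has_derivative (\<lambda>v. F2 (x,z) * fst v)) (at (x,z))"
    unfolding F1_def F2_def
    apply (rule has_derivative_eq_rhs)
     apply (rule derivative_intros da dp hd_snd)+
    using z apply simp
    apply (rule ext)
    apply (clarsimp simp: theta1_def theta2_def K2_def split: prod.splits)
    using z by (simp add: field_simps power2_eq_square)
  show "(F2 has_derivative (\<lambda>v. (- 4 * \<mu> x * F1 (x,z) - 2 * deriv \<mu> x * F (x,z)) * fst v)) (at (x,z))"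
    unfolding F_def F1_def F2_def
    apply (rule has_derivative_eq_rhs)
     apply (rule derivative_intros da db dp hd_snd hd_fst dmu)+
    using z apply simp
     apply (rule derivative_intros da db dp hd_snd hd_fst dmu)+
    using z apply simp
    apply (rule ext)
    apply (clarsimp simp: theta1_def theta2_def K2_def split: prod.splits)
    using z apply (simp add: field_simps power2_eq_square)
    done
qed


lemma sol_mono: "sol \<mu> J y0 y1 y2 \<Longrightarrow> J0 \<subseteq> J \<Longrightarrow> sol \<mu> J0 y0 y1 y2"
  unfolding sol_def by blast

lemma sol_diff:
  assumes "sol \<mu> J y0 y1 y2" "sol \<mu> J w0 w1 w2"
  shows "sol \<mu> J (\<lambda>t. y0 t - w0 t) (\<lambda>t. y1 t - w1 t) (\<lambda>t. y2 t - w2 t)"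
  unfolding sol_def
proof (intro ballI conjI)
  fix x assume x: "x \<in> J"
  note d = assms[unfolded sol_def, rule_format, OF x]
  show "((\<lambda>t. y0 t - w0 t) has_real_derivative y1 x - w1 x) (at x)"
    using d by (intro derivative_intros) auto
  show "((\<lambda>t. y1 t - w1 t) has_real_derivative y2 x - w2 x) (at x)"
    using d by (intro derivative_intros) auto
  have "((\<lambda>t. y2 t - w2 t) has_real_derivative (- 4 * \<mu> x * y1 x - 2 * deriv \<mu> x * y0 x) - (- 4 * \<mu> x * w1 x - 2 * deriv \<mu> x * w0 x)) (at x)"
    using d by (intro derivative_intros) auto
  then show "((\<lambda>t. y2 t - w2 t) has_real_derivative - 4 * \<mu> x * (y1 x - w1 x) - 2 * deriv \<mu> x * (y0 x - w0 x)) (at x)"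
    by (simp add: algebra_simps)
qed

lemma sol_agree:
  assumes J: "is_interval J" and mu: "\<forall>x\<in>J. \<mu> differentiable (at x) \<and> deriv \<mu> differentiable (at x)"
    and s1: "sol \<mu> J y0 y1 y2" and s2: "sol \<mu> J w0 w1 w2" and x0: "x0 \<in> J"
    and e: "y0 x0 = w0 x0" "y1 x0 = w1 x0" "y2 x0 = w2 x0" and x1: "x1 \<in> J"
  shows "y0 x1 = w0 x1 \<and> y1 x1 = w1 x1 \<and> y2 x1 = w2 x1"
  using sol_zero[OF J mu sol_diff[OF s1 s2] x0 _ _ _ x1] e by simp

lemma interval_Un:
  fixes J J' :: "real set"
  assumes "is_interval J" "is_interval J'" "x \<in> J" "x \<in> J'"
  shows "is_interval (J \<union> J')"
  using assms connected_Un[of J J'] unfolding is_interval_connected_1 by blast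

lemma sol_glue:
  assumes mu: "\<forall>x\<in>J \<union> J'. \<mu> differentiable (at x) \<and> deriv \<mu> differentiable (at x)"
    and J: "open J" "is_interval J" and J': "open J'" "is_interval J'"
    and s: "sol \<mu> J y0 y1 y2" and s': "sol \<mu> J' w0 w1 w2" and x: "x \<in> J" "x \<in> J'"
    and e: "y0 x = w0 x" "y1 x = w1 x" "y2 x = w2 x"
  shows "sol \<mu> (J \<union> J') (\<lambda>t. if t \<in> J then y0 t else w0 t) (\<lambda>t. if t \<in> J then y1 t else w1 t)
     (\<lambda>t. if t \<in> J then y2 t else w2 t)"
proof -
  have JJ: "is_interval (J \<inter> J')" using J J' by (simp add: is_interval_Int)
  have ag: "y0 t = w0 t \<and> y1 t = w1 t \<and> y2 t = w2 t" if "t \<in> J \<inter> J'" for t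
    using sol_agree[OF JJ _ sol_mono[OF s] sol_mono[OF s'] _ e that] mu x by auto
  show ?thesis unfolding sol_def
  proof (intro ballI)
    fix t assume t: "t \<in> J \<union> J'"
    show "((\<lambda>t. if t \<in> J then y0 t else w0 t) has_real_derivative (if t \<in> J then y1 t else w1 t)) (at t) \<and>
         ((\<lambda>t. if t \<in> J then y1 t else w1 t) has_real_derivative (if t \<in> J then y2 t else w2 t)) (at t) \<and>
         ((\<lambda>t. if t \<in> J then y2 t else w2 t) has_real_derivative
           - 4 * \<mu> t * (if t \<in> J then y1 t else w1 t) - 2 * deriv \<mu> t * (if t \<in> J then y0 t else w0 t)) (at t)"
    proof (cases "t \<in> J")
      case True
      note d = s[unfolded sol_def, rule_format, OF True]
      have v: "(if t \<in> J then y0 t else w0 t) = y0 t" "(if t \<in> J then y1 t else w1 t) = y1 t"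
        "(if t \<in> J then y2 t else w2 t) = y2 t" using True by simp_all
      show ?thesis unfolding v
      proof (intro conjI)
        show "((\<lambda>t. if t \<in> J then y0 t else w0 t) has_real_derivative y1 t) (at t)"
          by (rule has_field_derivative_transform_within_open[OF conjunct1[OF d] J(1) True]) simp
        show "((\<lambda>t. if t \<in> J then y1 t else w1 t) has_real_derivative y2 t) (at t)"
          by (rule has_field_derivative_transform_within_open[OF conjunct1[OF conjunct2[OF d]] J(1) True]) simp
        show "((\<lambda>t. if t \<in> J then y2 t else w2 t) has_real_derivative - 4 * \<mu> t * y1 t - 2 * deriv \<mu> t * y0 t) (at t)"
          by (rule has_field_derivative_transform_within_open[OF conjunct2[OF conjunct2[OF d]] J(1) True]) simp
      qed
    next
      case False
      then have t': "t \<in> J'" using t by auto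
      note d = s'[unfolded sol_def, rule_format, OF t']
      have eq: "(if s \<in> J then y0 s else w0 s) = w0 s" "(if s \<in> J then y1 s else w1 s) = w1 s"
         "(if s \<in> J then y2 s else w2 s) = w2 s" if "s \<in> J'" for s
        using ag[of s] that by auto
      have v: "(if t \<in> J then y0 t else w0 t) = w0 t" "(if t \<in> J then y1 t else w1 t) = w1 t"
        "(if t \<in> J then y2 t else w2 t) = w2 t" using False by simp_all
      show ?thesis unfolding v
      proof (intro conjI)
        show "((\<lambda>t. if t \<in> J then y0 t else w0 t) has_real_derivative w1 t) (at t)"
          by (rule has_field_derivative_transform_within_open[OF conjunct1[OF d] J'(1) t']) (simp add: eq)
        show "((\<lambda>t. if t \<in> J then y1 t else w1 t) has_real_derivative w2 t) (at t)"
          by (rule has_field_derivative_transform_within_open[OF conjunct1[OF conjunct2[OF d]] J'(1) t']) (simp add: eq)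
        show "((\<lambda>t. if t \<in> J then y2 t else w2 t) has_real_derivative - 4 * \<mu> t * w1 t - 2 * deriv \<mu> t * w0 t) (at t)"
          by (rule has_field_derivative_transform_within_open[OF conjunct2[OF conjunct2[OF d]] J'(1) t']) (simp add: eq)
      qed
    qed
  qed
qed

lemma slice_x:
  assumes "(G has_derivative (\<lambda>v. c * fst v)) (at (t, z))"
  shows "((\<lambda>s. G (s, z)) has_real_derivative c) (at t)"
proof -
  have P: "((\<lambda>s. (s, z)) has_derivative (\<lambda>h. (h, 0))) (at t)"
    by (rule has_derivative_Pair[OF has_derivative_ident has_derivative_const])
  have H: "((\<lambda>s. G (s, z)) has_derivative (\<lambda>h. c * fst (h, 0::real))) (at t)"
    using has_derivative_compose[OF P] assms by fastforce
  show ?thesis unfolding has_field_derivative_def by (rule has_derivative_eq_rhs[OF H]) (simp add: fun_eq_iff)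
qed

lemma slice_z:
  assumes "(G has_derivative (\<lambda>v. c * fst v)) (at (t, z))"
  shows "((\<lambda>s. G (t, s)) has_real_derivative 0) (at z)"
proof -
  have P: "((\<lambda>s. (t, s)) has_derivative (\<lambda>h. (0, h))) (at z)"
    by (rule has_derivative_Pair[OF has_derivative_const has_derivative_ident])
  have H: "((\<lambda>s. G (t, s)) has_derivative (\<lambda>h. c * fst (0::real, h))) (at z)"
    using has_derivative_compose[OF P] assms by fastforce
  show ?thesis unfolding has_field_derivative_def by (rule has_derivative_eq_rhs[OF H]) (simp add: fun_eq_iff)
qed

lemma aux_lin: fixes Y X B :: real assumes "Y = 2 * (X - B)" shows "B = X - 1/2 * Y" using assms by (simp add: field_simps)

lemma part1_fwd:
  fixes \<mu> :: "real \<Rightarrow> real" and U :: "(real \<times> real) set"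
  assumes U: "open U" "connected U" "U \<subseteq> {(x, z). z > 0}" and I: "is_interval (fst ` U)"
    and mu: "\<forall>x\<in>fst ` U. \<mu> differentiable (at x) \<and> deriv \<mu> differentiable (at x)"
    and sl: "is_solution \<mu> U a b p"
  shows "\<exists>f f1 f2 f3.
          (\<forall>x\<in>fst ` U. (f has_real_derivative f1 x) (at x) \<and>
                        (f1 has_real_derivative f2 x) (at x) \<and>
                        (f2 has_real_derivative f3 x) (at x) \<and>
                        f3 x + 4 * \<mu> x * f1 x + 2 * deriv \<mu> x * f x = 0) \<and>
          (\<forall>x z. (x, z) \<in> U \<longrightarrow>
             a (x, z) = -1 + f x \<and>
             b (x, z) = - (1 + \<mu> x * z^2) * f x + z * f1 x - 1/2 * z^2 * f2 x \<and>
             p (x, z) = 1 - 2 * f x + z * f1 x)"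
proof -
  define F where "F \<equiv> \<lambda>q. a q + 1"
  define F1 where "F1 \<equiv> \<lambda>q. (2 * a q + p q + 1) / snd q"
  define F2 where "F2 \<equiv> \<lambda>q. 2 * (- (1 + \<mu> (fst q) * snd q ^ 2) * (a q + 1) + snd q * ((2 * a q + p q + 1) / snd q) - b q) / snd q ^ 2"
  have dF: "(F has_derivative (\<lambda>v. F1 (x,z) * fst v)) (at (x,z))"
    "(F1 has_derivative (\<lambda>v. F2 (x,z) * fst v)) (at (x,z))"
    "(F2 has_derivative (\<lambda>v. (- 4 * \<mu> x * F1 (x,z) - 2 * deriv \<mu> x * F (x,z)) * fst v)) (at (x,z))"
    if q: "(x, z) \<in> U" for x z
  proof -
    have z: "z > 0" using q U(3) by auto
    have "x \<in> fst ` U" using q by force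
    then have dmu: "(\<mu> has_real_derivative deriv \<mu> x) (at x)"
      using mu DERIV_deriv_iff_real_differentiable by blast
    show "(F has_derivative (\<lambda>v. F1 (x,z) * fst v)) (at (x,z))"
      "(F1 has_derivative (\<lambda>v. F2 (x,z) * fst v)) (at (x,z))"
      "(F2 has_derivative (\<lambda>v. (- 4 * \<mu> x * F1 (x,z) - 2 * deriv \<mu> x * F (x,z)) * fst v)) (at (x,z))"
      using part1_derivs[OF sl q z dmu] unfolding F_def F1_def F2_def by auto
  qed
  have loc: "\<exists>r>0. ball q0 r \<subseteq> U \<and>
     (\<forall>t z. (t, z) \<in> ball q0 r \<longrightarrow> F (t, z) = F (t, snd q0) \<and> F1 (t, z) = F1 (t, snd q0) \<and> F2 (t, z) = F2 (t, snd q0)) \<and>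
     {fst q0 - r <..< fst q0 + r} \<subseteq> fst ` U \<and> (\<forall>t\<in>{fst q0 - r <..< fst q0 + r}. (t, snd q0) \<in> U) \<and>
     sol \<mu> {fst q0 - r <..< fst q0 + r} (\<lambda>t. F (t, snd q0)) (\<lambda>t. F1 (t, snd q0)) (\<lambda>t. F2 (t, snd q0))"
    if q0: "q0 \<in> U" for q0
  proof -
    obtain x0 z0 where q0e: "q0 = (x0, z0)" by (cases q0)
    obtain r where r: "r > 0" "ball q0 r \<subseteq> U" using U(1) q0 open_contains_ball by blast
    have inJ: "(t, z0) \<in> ball q0 r" if "t \<in> {x0 - r <..< x0 + r}" for t
      using that by (simp add: q0e dist_Pair_Pair dist_real_def abs_less_iff)
    have const: "F (t, z) = F (t, z0) \<and> F1 (t, z) = F1 (t, z0) \<and> F2 (t, z) = F2 (t, z0)"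
      if tz: "(t, z) \<in> ball q0 r" for t z
    proof -
      define S where "S = {min z z0 .. max z z0}"
      have cS: "convex S" unfolding S_def by simp
      have SB: "(t, s) \<in> ball q0 r" if "s \<in> S" for s
      proof -
        have "dist z0 s \<le> dist z0 z" using that unfolding S_def dist_real_def by auto
        then have "(dist z0 s)^2 \<le> (dist z0 z)^2" by (simp add: power_mono)
        then have A: "sqrt ((dist x0 t)\<^sup>2 + (dist z0 s)\<^sup>2) \<le> sqrt ((dist x0 t)\<^sup>2 + (dist z0 z)\<^sup>2)"
          by (simp add: real_sqrt_le_mono)
        have B: "sqrt ((dist x0 t)\<^sup>2 + (dist z0 z)\<^sup>2) < r" using tz by (simp add: q0e dist_Pair_Pair)
        have "dist q0 (t, s) < r" unfolding q0e dist_Pair_Pair using A B by linarith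
        then show ?thesis by simp
      qed
      have zS: "z \<in> S" "z0 \<in> S" unfolding S_def by auto
      have "\<exists>c. \<forall>s\<in>S. G (t, s) = c" if H: "\<And>s. s \<in> S \<Longrightarrow> \<exists>c. (G has_derivative (\<lambda>v. c * fst v)) (at (t, s))" for G
      proof (rule has_field_derivative_zero_constant[OF cS])
        fix s assume "s \<in> S"
        then obtain c where "(G has_derivative (\<lambda>v. c * fst v)) (at (t, s))" using H by blast
        from slice_z[OF this] show "((\<lambda>s. G (t, s)) has_real_derivative 0) (at s within S)"
          by (rule has_field_derivative_at_within)
      qed
      moreover have "s \<in> S \<Longrightarrow> (t, s) \<in> U" for s using SB r by auto
      ultimately have "\<exists>c. \<forall>s\<in>S. F (t, s) = c" "\<exists>c. \<forall>s\<in>S. F1 (t, s) = c" "\<exists>c. \<forall>s\<in>S. F2 (t, s) = c"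
        using dF by blast+
      then show ?thesis using zS by (metis (no_types, lifting))
    qed
    show ?thesis
    proof (intro exI[of _ r] conjI r allI impI)
      show "F (t, z) = F (t, snd q0)" "F1 (t, z) = F1 (t, snd q0)" "F2 (t, z) = F2 (t, snd q0)"
        if "(t, z) \<in> ball q0 r" for t z using const[OF that] by (simp_all add: q0e)
      show "\<forall>t\<in>{fst q0 - r <..< fst q0 + r}. (t, snd q0) \<in> U" using inJ r q0e by auto
      show "{fst q0 - r<..<fst q0 + r} \<subseteq> fst ` U"
      proof
        fix t assume "t \<in> {fst q0 - r<..<fst q0 + r}"
        then have "(t, z0) \<in> U" using inJ r q0e by auto
        then show "t \<in> fst ` U" by force
      qed
      show "sol \<mu> {fst q0 - r<..<fst q0 + r} (\<lambda>t. F (t, snd q0)) (\<lambda>t. F1 (t, snd q0)) (\<lambda>t. F2 (t, snd q0))"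
        unfolding sol_def
      proof (intro ballI conjI)
        fix t assume "t \<in> {fst q0 - r<..<fst q0 + r}"
        then have tU: "(t, z0) \<in> U" using inJ r q0e by auto
        show "((\<lambda>t. F (t, snd q0)) has_real_derivative F1 (t, snd q0)) (at t)"
          using slice_x[OF dF(1)[OF tU]] by (simp add: q0e)
        show "((\<lambda>t. F1 (t, snd q0)) has_real_derivative F2 (t, snd q0)) (at t)"
          using slice_x[OF dF(2)[OF tU]] by (simp add: q0e)
        show "((\<lambda>t. F2 (t, snd q0)) has_real_derivative - 4 * \<mu> t * F1 (t, snd q0) - 2 * deriv \<mu> t * F (t, snd q0)) (at t)"
          using slice_x[OF dF(3)[OF tU]] by (simp add: q0e)
      qed
    qed
  qed

  define R where "R q q' \<longleftrightarrow> (\<exists>J y0 y1 y2. open J \<and> is_interval J \<and> J \<subseteq> fst ` U \<and> fst q \<in> J \<and> fst q' \<in> J \<and>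
     sol \<mu> J y0 y1 y2 \<and> y0 (fst q) = F q \<and> y1 (fst q) = F1 q \<and> y2 (fst q) = F2 q \<and>
     y0 (fst q') = F q' \<and> y1 (fst q') = F1 q' \<and> y2 (fst q') = F2 q')" for q q'
  have Rall: "R q q'" if qq: "q \<in> U" "q' \<in> U" for q q'
  proof (rule connected_equivalence_relation[OF U(2) qq])
    fix x y assume "R x y"
    then obtain J y0 y1 y2 where "open J \<and> is_interval J \<and> J \<subseteq> fst ` U \<and> fst x \<in> J \<and> fst y \<in> J \<and>
     sol \<mu> J y0 y1 y2 \<and> y0 (fst x) = F x \<and> y1 (fst x) = F1 x \<and> y2 (fst x) = F2 x \<and>
     y0 (fst y) = F y \<and> y1 (fst y) = F1 y \<and> y2 (fst y) = F2 y" unfolding R_def by blast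
    then show "R y x" unfolding R_def
      apply - by (rule exI[of _ J], rule exI[of _ y0], rule exI[of _ y1], rule exI[of _ y2]) simp
  next
    fix x y w assume "R x y" "R y w"
    obtain J y0 y1 y2 where A: "open J" "is_interval J" "J \<subseteq> fst ` U" "fst x \<in> J" "fst y \<in> J"
     "sol \<mu> J y0 y1 y2" "y0 (fst x) = F x" "y1 (fst x) = F1 x" "y2 (fst x) = F2 x"
     "y0 (fst y) = F y" "y1 (fst y) = F1 y" "y2 (fst y) = F2 y" using \<open>R x y\<close> unfolding R_def by blast
    obtain J' w0 w1 w2 where B: "open J'" "is_interval J'" "J' \<subseteq> fst ` U" "fst y \<in> J'" "fst w \<in> J'"
     "sol \<mu> J' w0 w1 w2" "w0 (fst y) = F y" "w1 (fst y) = F1 y" "w2 (fst y) = F2 y"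
     "w0 (fst w) = F w" "w1 (fst w) = F1 w" "w2 (fst w) = F2 w" using \<open>R y w\<close> unfolding R_def by blast
    have muJ: "\<forall>x\<in>J \<union> J'. \<mu> differentiable (at x) \<and> deriv \<mu> differentiable (at x)"
      using mu A(3) B(3) by blast
    have g: "sol \<mu> (J \<union> J') (\<lambda>t. if t \<in> J then y0 t else w0 t) (\<lambda>t. if t \<in> J then y1 t else w1 t)
     (\<lambda>t. if t \<in> J then y2 t else w2 t)"
      by (rule sol_glue[OF muJ A(1,2) B(1,2) A(6) B(6) A(5) B(4)]) (simp_all add: A B)
    have ag: "y0 (fst w) = w0 (fst w) \<and> y1 (fst w) = w1 (fst w) \<and> y2 (fst w) = w2 (fst w)" if "fst w \<in> J"
      using sol_agree[OF is_interval_Int[OF A(2) B(2)] _ sol_mono[OF A(6)] sol_mono[OF B(6)], of "fst y" "fst w"]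
        muJ A B that by auto
    show "R x w" unfolding R_def
      apply (rule exI[of _ "J \<union> J'"], rule exI[of _ "\<lambda>t. if t \<in> J then y0 t else w0 t"],
        rule exI[of _ "\<lambda>t. if t \<in> J then y1 t else w1 t"], rule exI[of _ "\<lambda>t. if t \<in> J then y2 t else w2 t"])
      using A B g ag interval_Un[OF A(2) B(2) A(5) B(4)] by auto
  next
    fix q0 assume q0: "q0 \<in> U"
    obtain r where r: "r > 0" "ball q0 r \<subseteq> U"
      and c: "\<forall>t z. (t, z) \<in> ball q0 r \<longrightarrow> F (t, z) = F (t, snd q0) \<and> F1 (t, z) = F1 (t, snd q0) \<and> F2 (t, z) = F2 (t, snd q0)"
      and JU: "{fst q0 - r <..< fst q0 + r} \<subseteq> fst ` U"
      and sJ: "sol \<mu> {fst q0 - r <..< fst q0 + r} (\<lambda>t. F (t, snd q0)) (\<lambda>t. F1 (t, snd q0)) (\<lambda>t. F2 (t, snd q0))"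
      using loc[OF q0] by blast
    show "\<exists>T. openin (top_of_set U) T \<and> q0 \<in> T \<and> (\<forall>x\<in>T. R q0 x)"
    proof (intro exI[of _ "ball q0 r"] conjI ballI)
      show "openin (top_of_set U) (ball q0 r)" using r by (simp add: open_subset)
      show "q0 \<in> ball q0 r" using r by simp
      fix q assume q: "q \<in> ball q0 r"
      obtain t z where qe: "q = (t, z)" by (cases q)
      have "dist (fst q0) (fst q) < r" using q dist_fst_le[of q0 q] by simp
      then have tJ: "fst q \<in> {fst q0 - r <..< fst q0 + r}" by (auto simp: dist_real_def abs_less_iff)
      have cq: "F (t, snd q0) = F q" "F1 (t, snd q0) = F1 q" "F2 (t, snd q0) = F2 q"
        using c q qe by auto
      show "R q0 q" unfolding R_def
        apply (rule exI[of _ "{fst q0 - r <..< fst q0 + r}"], rule exI[of _ "\<lambda>t. F (t, snd q0)"],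
          rule exI[of _ "\<lambda>t. F1 (t, snd q0)"], rule exI[of _ "\<lambda>t. F2 (t, snd q0)"])
        using r tJ JU sJ cq qe by (simp add: is_interval_1)
    qed
  qed
  have key: "F (x, z) = F (x, z') \<and> F1 (x, z) = F1 (x, z') \<and> F2 (x, z) = F2 (x, z')"
    if "(x, z) \<in> U" "(x, z') \<in> U" for x z z'
    using Rall[OF that] unfolding R_def by auto
  define zz where "zz x = (SOME z. (x, z) \<in> U)" for x
  have zz: "(x, zz x) \<in> U" if "x \<in> fst ` U" for x
    using that unfolding zz_def by (auto intro: someI)
  define f where "f x = F (x, zz x)" for x
  define f1 where "f1 x = F1 (x, zz x)" for x
  define f2 where "f2 x = F2 (x, zz x)" for x
  define f3 where "f3 x = - 4 * \<mu> x * f1 x - 2 * deriv \<mu> x * f x" for x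
  have fF: "f x = F (x, z) \<and> f1 x = F1 (x, z) \<and> f2 x = F2 (x, z)" if "(x, z) \<in> U" for x z
  proof -
    have "x \<in> fst ` U" using that by force
    then show ?thesis using key[OF zz that] unfolding f_def f1_def f2_def by simp
  qed
  show ?thesis
  proof (rule exI[of _ f], rule exI[of _ f1], rule exI[of _ f2], rule exI[of _ f3], intro conjI ballI allI impI)
    fix x assume x: "x \<in> fst ` U"
    define z0 where "z0 = zz x"
    have q0: "(x, z0) \<in> U" using zz[OF x] by (simp add: z0_def)
    obtain r where r: "r > 0"
      and tU: "\<forall>t\<in>{x - r <..< x + r}. (t, z0) \<in> U"
      and sJ: "sol \<mu> {x - r <..< x + r} (\<lambda>t. F (t, z0)) (\<lambda>t. F1 (t, z0)) (\<lambda>t. F2 (t, z0))"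
      using loc[OF q0] by auto
    have xJ: "x \<in> {x - r <..< x + r}" using r by simp
    have eqJ: "F (t, z0) = f t" "F1 (t, z0) = f1 t" "F2 (t, z0) = f2 t" if "t \<in> {x - r <..< x + r}" for t
      using fF[OF tU[rule_format, OF that]] by simp_all
    note d = sJ[unfolded sol_def, rule_format, OF xJ]
    show "(f has_real_derivative f1 x) (at x)"
      using has_field_derivative_transform_within_open[OF conjunct1[OF d] open_greaterThanLessThan xJ] eqJ xJ by auto
    show "(f1 has_real_derivative f2 x) (at x)"
      using has_field_derivative_transform_within_open[OF conjunct1[OF conjunct2[OF d]] open_greaterThanLessThan xJ] eqJ xJ by auto
    show "(f2 has_real_derivative f3 x) (at x)"
      using has_field_derivative_transform_within_open[OF conjunct2[OF conjunct2[OF d]] open_greaterThanLessThan xJ] eqJ xJ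
      unfolding f3_def by auto
    show "f3 x + 4 * \<mu> x * f1 x + 2 * deriv \<mu> x * f x = 0" unfolding f3_def by simp
  next
    fix x z assume q: "(x, z) \<in> U"
    have z: "z > 0" using q U(3) by auto
    note e = fF[OF q]
    show "a (x, z) = -1 + f x" using e unfolding F_def by simp
    show "p (x, z) = 1 - 2 * f x + z * f1 x" using e z unfolding F_def F1_def by (simp add: field_simps)
    show "b (x, z) = - (1 + \<mu> x * z^2) * f x + z * f1 x - 1/2 * z^2 * f2 x"
    proof -
      have h0: "f x = a (x, z) + 1" using e unfolding F_def by simp
      have h2: "z * f1 x = 2 * a (x, z) + p (x, z) + 1" using e z unfolding F1_def by simp
      have h1: "f2 x * z^2 = 2 * (- (1 + \<mu> x * z^2) * (a (x,z) + 1) + (2 * a (x,z) + p (x,z) + 1) - b (x,z))"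
        using e z unfolding F2_def by simp
      have "b (x, z) = - (1 + \<mu> x * z^2) * (a (x,z) + 1) + (2 * a (x,z) + p (x,z) + 1) - 1/2 * (f2 x * z^2)"
        using h1 by (metis aux_lin)
      then show ?thesis using h2 by (simp add: h0 algebra_simps)
    qed
  qed
qed

theorem mainTheorem6:
  fixes \<mu> :: "real \<Rightarrow> real" and U :: "(real \<times> real) set"
  assumes "open U" and "connected U" and "U \<subseteq> {(x, z). z > 0}"
    and "is_interval (fst ` U)"
    and "smooth_on (fst ` U) \<mu>"
  shows
    "(\<forall>a b p. is_solution \<mu> U a b p \<longleftrightarrow>
       (\<exists>f f1 f2 f3.
          (\<forall>x\<in>fst ` U. (f has_real_derivative f1 x) (at x) \<and>
                        (f1 has_real_derivative f2 x) (at x) \<and>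
                        (f2 has_real_derivative f3 x) (at x) \<and>
                        f3 x + 4 * \<mu> x * f1 x + 2 * deriv \<mu> x * f x = 0) \<and>
          (\<forall>x z. (x, z) \<in> U \<longrightarrow>
             a (x, z) = -1 + f x \<and>
             b (x, z) = - (1 + \<mu> x * z^2) * f x + z * f1 x - 1/2 * z^2 * f2 x \<and>
             p (x, z) = 1 - 2 * f x + z * f1 x)))
     \<and>
     (\<forall>\<phi>0 \<phi>1 d0 d1 dd0 dd1.
        (\<forall>x\<in>fst ` U. (\<phi>0 has_real_derivative d0 x) (at x) \<and>
                      (d0 has_real_derivative dd0 x) (at x) \<and>
                      (\<phi>1 has_real_derivative d1 x) (at x) \<and>
                      (d1 has_real_derivative dd1 x) (at x) \<and>
                      dd0 x + \<mu> x * \<phi>0 x = 0 \<and> dd1 x + \<mu> x * \<phi>1 x = 0 \<and>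
                      \<phi>0 x * d1 x - \<phi>1 x * d0 x = 1)
        \<longrightarrow> (\<forall>f. (\<exists>f1 f2 f3.
                    (\<forall>x\<in>fst ` U. (f has_real_derivative f1 x) (at x) \<and>
                        (f1 has_real_derivative f2 x) (at x) \<and>
                        (f2 has_real_derivative f3 x) (at x) \<and>
                        f3 x + 4 * \<mu> x * f1 x + 2 * deriv \<mu> x * f x = 0))
                 \<longleftrightarrow> (\<exists>c0 c1 c2. \<forall>x\<in>fst ` U.
                        f x = - c0 * (\<phi>0 x)^2 - 2 * c1 * \<phi>0 x * \<phi>1 x - c2 * (\<phi>1 x)^2)))"
proof -
  have mu: "\<forall>x\<in>fst ` U. \<mu> differentiable (at x) \<and> deriv \<mu> differentiable (at x)"
  proof
    fix x assume x: "x \<in> fst ` U"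
    have "((deriv ^^ 0) \<mu>) differentiable (at x)" "((deriv ^^ Suc 0) \<mu>) differentiable (at x)"
      using assms(5) x unfolding smooth_on_def by blast+
    then show "\<mu> differentiable (at x) \<and> deriv \<mu> differentiable (at x)" by simp
  qed
  have mu1: "\<forall>x\<in>fst ` U. \<mu> differentiable (at x)" using mu by blast
  have oI: "open (fst ` U)" using assms(1) by (rule open_image_fst)
  show ?thesis
  proof (intro conjI allI impI iffI)
    fix a b p assume "is_solution \<mu> U a b p"
    then show "\<exists>f f1 f2 f3.
          (\<forall>x\<in>fst ` U. (f has_real_derivative f1 x) (at x) \<and>
                        (f1 has_real_derivative f2 x) (at x) \<and>
                        (f2 has_real_derivative f3 x) (at x) \<and>
                        f3 x + 4 * \<mu> x * f1 x + 2 * deriv \<mu> x * f x = 0) \<and>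
          (\<forall>x z. (x, z) \<in> U \<longrightarrow>
             a (x, z) = -1 + f x \<and>
             b (x, z) = - (1 + \<mu> x * z^2) * f x + z * f1 x - 1/2 * z^2 * f2 x \<and>
             p (x, z) = 1 - 2 * f x + z * f1 x)"
      by (rule part1_fwd[OF assms(1,2,3,4) mu])
  next
    fix a b p assume "\<exists>f f1 f2 f3.
          (\<forall>x\<in>fst ` U. (f has_real_derivative f1 x) (at x) \<and>
                        (f1 has_real_derivative f2 x) (at x) \<and>
                        (f2 has_real_derivative f3 x) (at x) \<and>
                        f3 x + 4 * \<mu> x * f1 x + 2 * deriv \<mu> x * f x = 0) \<and>
          (\<forall>x z. (x, z) \<in> U \<longrightarrow>
             a (x, z) = -1 + f x \<and>
             b (x, z) = - (1 + \<mu> x * z^2) * f x + z * f1 x - 1/2 * z^2 * f2 x \<and>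
             p (x, z) = 1 - 2 * f x + z * f1 x)"
    then obtain f f1 f2 f3 where fs: "\<forall>x\<in>fst ` U. (f has_real_derivative f1 x) (at x) \<and>
                        (f1 has_real_derivative f2 x) (at x) \<and>
                        (f2 has_real_derivative f3 x) (at x) \<and>
                        f3 x + 4 * \<mu> x * f1 x + 2 * deriv \<mu> x * f x = 0"
      and abp: "\<forall>x z. (x, z) \<in> U \<longrightarrow>
             a (x, z) = -1 + f x \<and>
             b (x, z) = - (1 + \<mu> x * z^2) * f x + z * f1 x - 1/2 * z^2 * f2 x \<and>
             p (x, z) = 1 - 2 * f x + z * f1 x" by blast
    show "is_solution \<mu> U a b p" by (rule part1_bwd[OF assms(1,3) mu1 fs abp])
  next
    fix \<phi>0 \<phi>1 d0 d1 dd0 dd1 f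
    assume ph: "\<forall>x\<in>fst ` U. (\<phi>0 has_real_derivative d0 x) (at x) \<and>
                      (d0 has_real_derivative dd0 x) (at x) \<and>
                      (\<phi>1 has_real_derivative d1 x) (at x) \<and>
                      (d1 has_real_derivative dd1 x) (at x) \<and>
                      dd0 x + \<mu> x * \<phi>0 x = 0 \<and> dd1 x + \<mu> x * \<phi>1 x = 0 \<and>
                      \<phi>0 x * d1 x - \<phi>1 x * d0 x = 1"
    {
      assume "\<exists>f1 f2 f3.
                    (\<forall>x\<in>fst ` U. (f has_real_derivative f1 x) (at x) \<and>
                        (f1 has_real_derivative f2 x) (at x) \<and>
                        (f2 has_real_derivative f3 x) (at x) \<and>
                        f3 x + 4 * \<mu> x * f1 x + 2 * deriv \<mu> x * f x = 0)"
      then obtain f1 f2 f3 where fs: "\<forall>x\<in>fst ` U. (f has_real_derivative f1 x) (at x) \<and>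
                        (f1 has_real_derivative f2 x) (at x) \<and>
                        (f2 has_real_derivative f3 x) (at x) \<and>
                        f3 x + 4 * \<mu> x * f1 x + 2 * deriv \<mu> x * f x = 0" by blast
      show "\<exists>c0 c1 c2. \<forall>x\<in>fst ` U.
                        f x = - c0 * (\<phi>0 x)^2 - 2 * c1 * \<phi>0 x * \<phi>1 x - c2 * (\<phi>1 x)^2"
        by (rule part2_fwd[OF assms(4) mu1 ph fs])
    }
    {
      assume "\<exists>c0 c1 c2. \<forall>x\<in>fst ` U.
                        f x = - c0 * (\<phi>0 x)^2 - 2 * c1 * \<phi>0 x * \<phi>1 x - c2 * (\<phi>1 x)^2"
      then obtain c0 c1 c2 where fe: "\<forall>x\<in>fst ` U.
                        f x = - c0 * (\<phi>0 x)^2 - 2 * c1 * \<phi>0 x * \<phi>1 x - c2 * (\<phi>1 x)^2" by blast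
      show "\<exists>f1 f2 f3.
                    (\<forall>x\<in>fst ` U. (f has_real_derivative f1 x) (at x) \<and>
                        (f1 has_real_derivative f2 x) (at x) \<and>
                        (f2 has_real_derivative f3 x) (at x) \<and>
                        f3 x + 4 * \<mu> x * f1 x + 2 * deriv \<mu> x * f x = 0)"
        by (rule part2_bwd[OF oI mu1 ph fe])
    }
  qed
qed

end
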